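(* For every $n\ge1$, the permutation $w=n\,(n-1)\cdots2\,1$ is the unique $w\in S_n$ with $\operatorname{stab}(w)=1$.
   Context: $T(w)$ is the standard skew tableau of shape $(1)\cup\cdots\cup(1)$ ($n$ single cells placed along an anti-diagonal, each strictly northeast of the previous, no shared rows or columns) whose reading word (rows read left to right, from bottom row to top row) is $w$. $\operatorname{stab}(w)=\operatorname{stab}(T(w))$, where for a standard skew tableau $S$ with $m$ cells whose row lengths weakly decrease from top to bottom: $S^{(k)}$ is obtained by attaching $k-1$ shifted copies of $S$ to the right of $S$ (row $i$ of $S^{(k)}$ begins in the same column as row $i$ of $S$ and consists of the entries of row $i$ of $S$, followed by these entries plus $m$, ..., plus $(k-1)m$); $S$ stabilizes at $k$ if every entry in $[(k-1)m+1,km]$ lies in the same row of $\operatorname{Rect}(S^{(k)})$ as in $S^{(k)}$ ($\operatorname{Rect}$ = jeu de taquin rectification); $\operatorname{stab}(S)$ is the least such $k\ge1$. *)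

theory Defs
  imports Main
begin

text \<open>A (skew) tableau is a finite partial map from cells (row, column) to entries.
  English convention: row 0 is the top row, rows grow downwards, columns grow to the right.\<close>

type_synonym tab = "nat \<times> nat \<Rightarrow> nat option"

text \<open>T(w): single cells along an anti-diagonal, reading word (rows bottom to top) equal to w.
  For w of length n, the entry w!j sits in row n-1-j, column j.\<close>

definition antidiag_tab :: "nat list \<Rightarrow> tab" where
  "antidiag_tab w = (\<lambda>(r, c). if r < length w \<and> c = length w - 1 - r
                               then Some (w ! (length w - 1 - r)) else None)"

definition row_cols :: "tab \<Rightarrow> nat \<Rightarrow> nat set" where
  "row_cols S r = {c. S (r, c) \<noteq> None}"

text \<open>S^(k): row r of S (starting at column c0, length l) followed by k-1 shifted copies,
  the t-th copy having entries increased by t*m, m the number of cells of S.\<close>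

definition tab_power :: "tab \<Rightarrow> nat \<Rightarrow> tab" where
  "tab_power S k = (\<lambda>(r, c).
     let cs = row_cols S r; c0 = Min cs; l = card cs; m = card (dom S) in
     if cs \<noteq> {} \<and> c0 \<le> c \<and> c < c0 + k * l
     then map_option (\<lambda>x. x + ((c - c0) div l) * m) (S (r, c0 + (c - c0) mod l))
     else None)"

definition inner_cells :: "tab \<Rightarrow> (nat \<times> nat) set" where
  "inner_cells T = {(r, c). (r, c) \<notin> dom T \<and> (\<exists>(r', c') \<in> dom T. r \<le> r' \<and> c \<le> c')}"

definition inner_corners :: "tab \<Rightarrow> (nat \<times> nat) set" where
  "inner_corners T = {(r, c). (r, c) \<in> inner_cells T \<and> (Suc r, c) \<notin> inner_cells T
                                 \<and> (r, Suc c) \<notin> inner_cells T}"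

text \<open>Deterministic choice of the inner corner: the lowest one.\<close>

definition chosen_corner :: "tab \<Rightarrow> nat \<times> nat" where
  "chosen_corner T = (THE x. x \<in> inner_corners T \<and> (\<forall>y \<in> inner_corners T. fst y \<le> fst x))"

fun slide :: "nat \<Rightarrow> tab \<Rightarrow> nat \<times> nat \<Rightarrow> tab" where
  "slide 0 T h = T"
| "slide (Suc f) T (r, c) =
     (case T (r, Suc c) of
        None \<Rightarrow> (case T (Suc r, c) of
                   None \<Rightarrow> T
                 | Some b \<Rightarrow> slide f (T((r, c) := Some b, (Suc r, c) := None)) (Suc r, c))
      | Some a \<Rightarrow> (case T (Suc r, c) of
                   None \<Rightarrow> slide f (T((r, c) := Some a, (r, Suc c) := None)) (r, Suc c)
                 | Some b \<Rightarrow>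
                     (if a < b then slide f (T((r, c) := Some a, (r, Suc c) := None)) (r, Suc c)
                      else slide f (T((r, c) := Some b, (Suc r, c) := None)) (Suc r, c))))"

definition rect_step :: "tab \<Rightarrow> tab" where
  "rect_step T = (if inner_cells T = {} then T
                  else slide (card (dom T) + 1) T (chosen_corner T))"

text \<open>Rectification: slide into inner corners until the inner shape is empty
  (each slide shrinks the inner shape, so card (inner_cells T) steps suffice).\<close>

definition rect :: "tab \<Rightarrow> tab" where
  "rect T = (rect_step ^^ card (inner_cells T)) T"

definition stabilizes_at :: "tab \<Rightarrow> nat \<Rightarrow> bool" where
  "stabilizes_at S k = (let m = card (dom S); Sk = tab_power S k; R = rect Sk in
     \<forall>e r c r' c'. (k - 1) * m < e \<and> e \<le> k * m \<longrightarrow> Sk (r, c) = Some e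
        \<longrightarrow> R (r', c') = Some e \<longrightarrow> r' = r)"

definition stab :: "tab \<Rightarrow> nat" where
  "stab S = (if \<exists>k\<ge>1. stabilizes_at S k then LEAST k. k \<ge> 1 \<and> stabilizes_at S k else 0)"

definition stab_word :: "nat list \<Rightarrow> nat" where
  "stab_word w = stab (antidiag_tab w)"

end

theory Submission
  imports Defs
begin

definition le2 :: "nat \<times> nat \<Rightarrow> nat \<times> nat \<Rightarrow> bool" where
  "le2 x y = (fst x \<le> fst y \<and> snd x \<le> snd y)"

definition convs :: "(nat \<times> nat) set \<Rightarrow> bool" where
  "convs A = (\<forall>x y z. x \<in> A \<longrightarrow> z \<in> A \<longrightarrow> le2 x y \<longrightarrow> le2 y z \<longrightarrow> y \<in> A)"

lemma slide_keep:
  assumes "T h = None" "T x = Some e"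
  shows "\<exists>y. slide f T h y = Some e \<and> le2 y x"
  using assms
proof (induction f arbitrary: T h x)
  case 0
  then show ?case by (intro exI[of _ x]) (auto simp: le2_def)
next
  case (Suc f)
  obtain r c where h: "h = (r, c)" by (cases h)
  have xh: "x \<noteq> (r, c)" using Suc.prems h by auto
  have mv: "\<exists>y. slide f (T(h := Some a, h' := None)) h' y = Some e \<and> le2 y x"
    if "T h' = Some a" "le2 h h'" "h' \<noteq> h" for h' a
  proof -
    let ?T2 = "T(h := Some a, h' := None)"
    have "\<exists>x'. ?T2 x' = Some e \<and> le2 x' x"
    proof (cases "x = h'")
      case True then show ?thesis using that Suc.prems by (intro exI[of _ h]) (auto simp: le2_def)
    next
      case False
      then show ?thesis using xh h Suc.prems by (intro exI[of _ x]) (auto simp: le2_def)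
    qed
    then obtain x' where x': "?T2 x' = Some e" "le2 x' x" by blast
    have "?T2 h' = None" by simp
    from Suc.IH[OF this x'(1)] obtain y where "slide f ?T2 h' y = Some e" "le2 y x'" by blast
    then show ?thesis using x'(2) by (intro exI[of _ y]) (auto simp: le2_def)
  qed
  show ?case
  proof (cases "T (r, Suc c)")
    case None
    show ?thesis
    proof (cases "T (Suc r, c)")
      case None2: None
      then show ?thesis using None Suc.prems h by (intro exI[of _ x]) (auto simp: le2_def)
    next
      case (Some b)
      have st: "slide (Suc f) T h = slide f (T(h := Some b, (Suc r, c) := None)) (Suc r, c)"
        using None Some h by simp
      show ?thesis unfolding st by (rule mv; use Some h in \<open>simp add: le2_def\<close>)
    qed
  next
    case (Some a)
    show ?thesis
    proof (cases "T (Suc r, c)")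
      case None2: None
      have st: "slide (Suc f) T h = slide f (T(h := Some a, (r, Suc c) := None)) (r, Suc c)"
        using None2 Some h by simp
      show ?thesis unfolding st by (rule mv; use Some h in \<open>simp add: le2_def\<close>)
    next
      case Some2: (Some b)
      show ?thesis
      proof (cases "a < b")
        case True
        have st: "slide (Suc f) T h = slide f (T(h := Some a, (r, Suc c) := None)) (r, Suc c)"
          using Some2 Some h True by simp
        show ?thesis unfolding st by (rule mv; use Some h in \<open>simp add: le2_def\<close>)
      next
        case False
        have st: "slide (Suc f) T h = slide f (T(h := Some b, (Suc r, c) := None)) (Suc r, c)"
          using Some2 Some h False by simp
        show ?thesis unfolding st by (rule mv; use Some2 h in \<open>simp add: le2_def\<close>)
      qed
    qed
  qed
qed

lemma move_step:
  assumes "T h = None" "finite D" "dom T = D - {h}" "h \<in> D" "T h' = Some a"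
    "fst h' + snd h' = Suc (fst h + snd h)"
    "card {d\<in>D. fst h + snd h < fst d + snd d} < Suc f"
  shows "(T(h := Some a, h' := None)) h' = None"
    "dom (T(h := Some a, h' := None)) = D - {h'}" "h' \<in> D"
    "card {d\<in>D. fst h' + snd h' < fst d + snd d} < f"
proof -
  show "(T(h := Some a, h' := None)) h' = None" by simp
  have "h' \<in> dom T" using assms(5) by blast
  then have hD: "h' \<in> D" using assms(3) by blast
  then show "h' \<in> D" .
  have ne: "h \<noteq> h'" using assms(6) by auto
  have "dom (T(h := Some a, h' := None)) = insert h (dom T) - {h'}" by simp
  also have "\<dots> = insert h (D - {h}) - {h'}" using assms(3) by simp
  also have "\<dots> = D - {h'}" using assms(4) by blast
  finally show "dom (T(h := Some a, h' := None)) = D - {h'}" .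
  let ?A = "{d\<in>D. fst h' + snd h' < fst d + snd d}"
  let ?B = "{d\<in>D. fst h + snd h < fst d + snd d}"
  have "?A \<subseteq> ?B" using assms(6) by auto
  moreover have "h' \<in> ?B" using hD assms(6) by simp
  moreover have "h' \<notin> ?A" by simp
  ultimately have "?A \<subset> ?B" by blast
  then have "card ?A < card ?B"
    using assms(2) by (intro psubset_card_mono) auto
  then show "card ?A < f" using assms(7) by linarith
qed

lemma slide_shape:
  assumes "T h = None" "finite D" "dom T = D - {h}" "h \<in> D"
    "card {d\<in>D. fst h + snd h < fst d + snd d} < f"
  shows "\<exists>e\<in>D. dom (slide f T h) = D - {e} \<and> (Suc (fst e), snd e) \<notin> D \<and> (fst e, Suc (snd e)) \<notin> D"
  using assms
proof (induction f arbitrary: T h)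
  case 0
  then show ?case by simp
next
  case (Suc f)
  obtain r c where h: "h = (r, c)" by (cases h)
  have mv: "\<exists>e\<in>D. dom (slide f (T(h := Some a, h' := None)) h') = D - {e} \<and> (Suc (fst e), snd e) \<notin> D \<and> (fst e, Suc (snd e)) \<notin> D"
    if "T h' = Some a" "fst h' + snd h' = Suc (fst h + snd h)" for h' a
  proof -
    note ms = move_step[OF Suc.prems(1-4) that Suc.prems(5)]
    have IH: "\<exists>e\<in>D. dom (slide f T' h0) = D - {e} \<and> (Suc (fst e), snd e) \<notin> D \<and> (fst e, Suc (snd e)) \<notin> D"
      if "T' h0 = None" "dom T' = D - {h0}" "h0 \<in> D" "card {d\<in>D. fst h0 + snd h0 < fst d + snd d} < f" for T' h0
      using Suc.IH that Suc.prems(2) by blast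
    show ?thesis by (rule IH) (fact ms)+
  qed
  show ?case
  proof (cases "T (r, Suc c)")
    case None
    show ?thesis
    proof (cases "T (Suc r, c)")
      case None2: None
      have s: "slide (Suc f) T h = T" using None None2 h by simp
      have "(Suc r, c) \<notin> D"
      proof
        assume "(Suc r, c) \<in> D"
        then have "(Suc r, c) \<in> dom T" using Suc.prems(3) h by auto
        then show False using None2 by auto
      qed
      moreover have "(r, Suc c) \<notin> D"
      proof
        assume "(r, Suc c) \<in> D"
        then have "(r, Suc c) \<in> dom T" using Suc.prems(3) h by auto
        then show False using None by auto
      qed
      ultimately have "dom (slide (Suc f) T h) = D - {h} \<and> (Suc (fst h), snd h) \<notin> D \<and> (fst h, Suc (snd h)) \<notin> D"
        using s Suc.prems(3) h by simp
      then show ?thesis using Suc.prems(4) by blast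
    next
      case (Some b)
      have st: "slide (Suc f) T h = slide f (T(h := Some b, (Suc r, c) := None)) (Suc r, c)"
        using None Some h by simp
      show ?thesis unfolding st by (rule mv; use Some h in simp)
    qed
  next
    case (Some a)
    show ?thesis
    proof (cases "T (Suc r, c)")
      case None2: None
      have st: "slide (Suc f) T h = slide f (T(h := Some a, (r, Suc c) := None)) (r, Suc c)"
        using None2 Some h by simp
      show ?thesis unfolding st by (rule mv; use Some h in simp)
    next
      case Some2: (Some b)
      show ?thesis
      proof (cases "a < b")
        case True
        have st: "slide (Suc f) T h = slide f (T(h := Some a, (r, Suc c) := None)) (r, Suc c)"
          using Some2 Some h True by simp
        show ?thesis unfolding st by (rule mv; use Some h in simp)
      next
        case False
        have st: "slide (Suc f) T h = slide f (T(h := Some b, (Suc r, c) := None)) (Suc r, c)"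
          using Some2 Some h False by simp
        show ?thesis unfolding st by (rule mv; use Some2 h in simp)
      qed
    qed
  qed
qed

lemma inner_iff: "x \<in> inner_cells T \<longleftrightarrow> x \<notin> dom T \<and> (\<exists>z\<in>dom T. le2 x z)"
  unfolding inner_cells_def le2_def by (auto simp: case_prod_beta)

lemma corner_inner: "x \<in> inner_corners T \<Longrightarrow> x \<in> inner_cells T"
  unfolding inner_corners_def by (cases x) auto

lemma inner_finite:
  assumes "finite (dom T)"
  shows "finite (inner_cells T)"
proof -
  have "inner_cells T \<subseteq> (\<Union>z\<in>dom T. {..fst z} \<times> {..snd z})"
    unfolding inner_cells_def by force
  moreover have "finite (\<Union>z\<in>dom T. {..fst z} \<times> {..snd z})" using assms by auto
  ultimately show ?thesis by (rule finite_subset)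
qed

lemma corner_exists:
  assumes "finite (dom T)" "inner_cells T \<noteq> {}"
  shows "inner_corners T \<noteq> {}"
proof -
  let ?I = "inner_cells T"
  let ?g = "\<lambda>x::nat\<times>nat. fst x + snd x"
  have fin: "finite ?I" using inner_finite[OF assms(1)] .
  obtain x where x: "x \<in> ?I" "?g x = Max (?g ` ?I)"
    using Max_in[of "?g ` ?I"] fin assms(2) by fastforce
  obtain r c where xe: "x = (r, c)" by (cases x)
  have "(Suc r, c) \<notin> ?I"
  proof
    assume "(Suc r, c) \<in> ?I"
    then have "?g (Suc r, c) \<in> ?g ` ?I" by (rule imageI)
    then have "?g (Suc r, c) \<le> Max (?g ` ?I)" using fin by (intro Max_ge) auto
    then show False using x xe by simp
  qed
  moreover have "(r, Suc c) \<notin> ?I"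
  proof
    assume "(r, Suc c) \<in> ?I"
    then have "?g (r, Suc c) \<in> ?g ` ?I" by (rule imageI)
    then have "?g (r, Suc c) \<le> Max (?g ` ?I)" using fin by (intro Max_ge) auto
    then show False using x xe by simp
  qed
  ultimately have "x \<in> inner_corners T" using x xe unfolding inner_corners_def by simp
  then show ?thesis by blast
qed

lemma corner_unique_aux:
  assumes "convs (dom T)" "(r, c1) \<in> inner_corners T" "(r, c2) \<in> inner_corners T" "c1 < c2"
  shows False
proof -
  have n1: "(r, Suc c1) \<notin> inner_cells T" using assms(2) unfolding inner_corners_def by simp
  have i2: "(r, c2) \<in> inner_cells T" using assms(3) unfolding inner_corners_def by simp
  then have d2: "(r, c2) \<notin> dom T" unfolding inner_iff by blast
  obtain z where z: "z \<in> dom T" "r \<le> fst z" "c2 \<le> snd z" using i2 unfolding inner_iff le2_def by auto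
  have "(r, Suc c1) \<in> dom T"
  proof (rule ccontr)
    assume "(r, Suc c1) \<notin> dom T"
    then have "(r, Suc c1) \<in> inner_cells T" unfolding inner_iff le2_def
      using z assms(4) by auto
    then show False using n1 by simp
  qed
  moreover have "le2 (r, Suc c1) (r, c2)" using assms(4) by (simp add: le2_def)
  moreover have "le2 (r, c2) z" using z by (simp add: le2_def)
  ultimately have "(r, c2) \<in> dom T" using assms(1) z(1) unfolding convs_def by blast
  then show False using d2 by simp
qed

lemma corner_unique:
  assumes "convs (dom T)" "a \<in> inner_corners T" "b \<in> inner_corners T" "fst a = fst b"
  shows "a = b"
proof -
  obtain r c1 where a: "a = (r, c1)" by (cases a)
  obtain c2 where b: "b = (r, c2)" using assms(4) a by (cases b) auto
  have "\<not> c1 < c2" using corner_unique_aux[OF assms(1)] assms(2,3) a b by blast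
  moreover have "\<not> c2 < c1" using corner_unique_aux[OF assms(1)] assms(2,3) a b by blast
  ultimately show ?thesis using a b by simp
qed

lemma chosen_in:
  assumes "finite (dom T)" "convs (dom T)" "inner_cells T \<noteq> {}"
  shows "chosen_corner T \<in> inner_corners T"
proof -
  let ?C = "inner_corners T"
  have finC: "finite ?C"
    using inner_finite[OF assms(1)] unfolding inner_corners_def
    by (rule finite_subset[rotated]) auto
  have neC: "?C \<noteq> {}" using corner_exists[OF assms(1,3)] .
  obtain x where x: "x \<in> ?C" "fst x = Max (fst ` ?C)"
    using Max_in[of "fst ` ?C"] finC neC by fastforce
  have P: "x \<in> ?C \<and> (\<forall>y\<in>?C. fst y \<le> fst x)"
    using x finC by auto
  have U: "\<And>y. y \<in> ?C \<and> (\<forall>z\<in>?C. fst z \<le> fst y) \<Longrightarrow> y = x"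
  proof -
    fix y assume y: "y \<in> ?C \<and> (\<forall>z\<in>?C. fst z \<le> fst y)"
    then have "fst x \<le> fst y" using x by blast
    moreover have "fst y \<le> fst x" using P y by blast
    ultimately show "y = x" using corner_unique[OF assms(2)] x y by (metis le_antisym)
  qed
  have "chosen_corner T = x" unfolding chosen_corner_def
    by (rule the_equality) (use P U in blast)+
  then show ?thesis using x by simp
qed

lemma conv_insert:
  assumes "convs (dom T)" "c \<in> inner_corners T"
  shows "convs (insert c (dom T))"
  unfolding convs_def
proof (intro allI impI)
  fix x y z
  assume x: "x \<in> insert c (dom T)" and z: "z \<in> insert c (dom T)"
    and xy: "le2 x y" and yz: "le2 y z"
  obtain r0 c0 where c: "c = (r0, c0)" by (metis surj_pair)
  have ci: "c \<in> inner_cells T" and n1: "(Suc r0, c0) \<notin> inner_cells T"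
    and n2: "(r0, Suc c0) \<notin> inner_cells T"
    using assms(2) c unfolding inner_corners_def by auto
  obtain w where w: "w \<in> dom T" "le2 c w"
    using ci unfolding inner_iff by blast
  have cd: "c \<notin> dom T" using ci unfolding inner_iff by blast
  have trans: "\<And>a b d. le2 a b \<Longrightarrow> le2 b d \<Longrightarrow> le2 a d" unfolding le2_def by auto
  have D: "\<And>a b d. a \<in> dom T \<Longrightarrow> d \<in> dom T \<Longrightarrow> le2 a b \<Longrightarrow> le2 b d \<Longrightarrow> b \<in> dom T"
    using assms(1) unfolding convs_def by blast
  show "y \<in> insert c (dom T)"
  proof (cases "y = c")
    case True then show ?thesis by simp
  next
    case yc: False
    show ?thesis
    proof (cases "z = c")
      case True
      have "x \<in> dom T \<or> x = c" using x by auto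
      then show ?thesis
      proof
        assume "x \<in> dom T"
        then show ?thesis using D[of x w y] w True yz xy trans by blast
      next
        assume "x = c"
        then have "y = c" using xy yz True unfolding le2_def by (simp add: prod_eq_iff)
        then show ?thesis by simp
      qed
    next
      case zc: False
      then have zd: "z \<in> dom T" using z by auto
      show ?thesis
      proof (cases "x = c")
        case False
        then show ?thesis using D[of x z y] x zd xy yz by auto
      next
        case True
        then have "le2 (Suc r0, c0) y \<or> le2 (r0, Suc c0) y"
          using xy yc c unfolding le2_def by (cases y) auto
        then obtain nb where nb: "nb = (Suc r0, c0) \<or> nb = (r0, Suc c0)" "le2 nb y" by blast
        have "nb \<notin> inner_cells T" using nb n1 n2 by auto
        moreover have "le2 nb z" using nb yz trans by blast
        ultimately have "nb \<in> dom T" using zd unfolding inner_iff by blast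
        then show ?thesis using D[of nb z y] zd nb yz by auto
      qed
    qed
  qed
qed

lemma conv_remove:
  assumes "convs D" "e \<in> D" "(Suc (fst e), snd e) \<notin> D" "(fst e, Suc (snd e)) \<notin> D"
  shows "convs (D - {e})"
  unfolding convs_def
proof (intro allI impI)
  fix x y z
  assume x: "x \<in> D - {e}" and z: "z \<in> D - {e}" and xy: "le2 x y" and yz: "le2 y z"
  have yD: "y \<in> D" using assms(1) x z xy yz unfolding convs_def by blast
  have "y \<noteq> e"
  proof
    assume "y = e"
    then have "z \<noteq> e" "le2 e z" using z yz by auto
    then have "le2 (Suc (fst e), snd e) z \<or> le2 (fst e, Suc (snd e)) z"
      unfolding le2_def by (cases e, cases z) auto
    moreover have "le2 e (Suc (fst e), snd e)" "le2 e (fst e, Suc (snd e))" unfolding le2_def by auto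
    ultimately show False using assms z unfolding convs_def by blast
  qed
  then show "y \<in> D - {e}" using yD by simp
qed

lemma rect_step_general:
  assumes "finite (dom T)" "convs (dom T)"
  shows "finite (dom (rect_step T)) \<and> convs (dom (rect_step T)) \<and>
         (\<forall>x e. T x = Some e \<longrightarrow> (\<exists>y. rect_step T y = Some e \<and> le2 y x))"
proof (cases "inner_cells T = {}")
  case True
  then show ?thesis using assms unfolding rect_step_def by (auto simp: le2_def)
next
  case False
  let ?c = "chosen_corner T"
  have cc: "?c \<in> inner_corners T" using chosen_in[OF assms False] .
  have cnd: "?c \<notin> dom T" using corner_inner[OF cc] unfolding inner_iff by blast
  then have Tc: "T ?c = None" by auto
  let ?D = "insert ?c (dom T)"
  have finD: "finite ?D" using assms(1) by simp
  have domT: "dom T = ?D - {?c}" using cnd by auto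
  have "{d\<in>?D. fst ?c + snd ?c < fst d + snd d} \<subseteq> dom T" by auto
  then have "card {d\<in>?D. fst ?c + snd ?c < fst d + snd d} \<le> card (dom T)"
    using assms(1) by (rule card_mono[rotated])
  then have card: "card {d\<in>?D. fst ?c + snd ?c < fst d + snd d} < card (dom T) + 1" by simp
  have rs: "rect_step T = slide (card (dom T) + 1) T ?c" unfolding rect_step_def using False by simp
  obtain e where e: "e \<in> ?D" "dom (rect_step T) = ?D - {e}" "(Suc (fst e), snd e) \<notin> ?D"
      "(fst e, Suc (snd e)) \<notin> ?D"
  proof -
    have cD: "?c \<in> ?D" by simp
    from slide_shape[OF Tc finD domT cD card] obtain e where "e \<in> ?D"
      "dom (slide (card (dom T) + 1) T ?c) = ?D - {e}" "(Suc (fst e), snd e) \<notin> ?D"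
      "(fst e, Suc (snd e)) \<notin> ?D" by blast
    then show ?thesis using that rs by simp
  qed
  have "convs ?D" using conv_insert[OF assms(2) cc] .
  then have "convs (dom (rect_step T))" using conv_remove[OF _ e(1,3,4)] e(2) by simp
  moreover have "finite (dom (rect_step T))" using e(2) finD by simp
  moreover have "\<forall>x e. T x = Some e \<longrightarrow> (\<exists>y. rect_step T y = Some e \<and> le2 y x)"
    using slide_keep[where T=T and h="?c", OF Tc] rs by simp
  ultimately show ?thesis by blast
qed

definition tp :: "nat \<Rightarrow> (nat \<Rightarrow> nat) \<Rightarrow> (nat \<Rightarrow> nat) \<Rightarrow> tab" where
  "tp n v p = (\<lambda>(r, c). if r < n \<and> c = p r then Some (v r) else None)"

lemma tp_app[simp]: "tp n v p (r, c) = (if r < n \<and> c = p r then Some (v r) else None)"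
  by (simp add: tp_def)

definition anti :: "nat \<Rightarrow> (nat \<Rightarrow> nat) \<Rightarrow> bool" where
  "anti n p = (\<forall>r. Suc r < n \<longrightarrow> p (Suc r) \<le> p r)"

lemma anti_le: "anti n p \<Longrightarrow> r \<le> r' \<Longrightarrow> r' < n \<Longrightarrow> p r' \<le> p r"
proof (induction r')
  case 0 then show ?case by simp
next
  case (Suc r')
  show ?case
  proof (cases "r = Suc r'")
    case True then show ?thesis by simp
  next
    case False
    then have "r \<le> r'" using Suc.prems by simp
    then have "p r' \<le> p r" using Suc by simp
    moreover have "p (Suc r') \<le> p r'" using Suc.prems unfolding anti_def by simp
    ultimately show ?thesis by simp
  qed
qed

lemma dom_tp: "dom (tp n v p) = (\<lambda>r. (r, p r)) ` {..<n}"
proof (rule set_eqI)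
  fix x :: "nat \<times> nat"
  obtain a b where x: "x = (a, b)" by (metis surj_pair)
  show "x \<in> dom (tp n v p) \<longleftrightarrow> x \<in> (\<lambda>r. (r, p r)) ` {..<n}"
    unfolding x by (auto simp: dom_def)
qed

lemma card_dom_tp: "card (dom (tp n v p)) = n"
  unfolding dom_tp by (subst card_image) (auto simp: inj_on_def)

lemma finite_dom_tp: "finite (dom (tp n v p))" unfolding dom_tp by simp

lemma inner_tp:
  assumes "anti n p"
  shows "inner_cells (tp n v p) = {(r, c). r < n \<and> c < p r}"
proof (rule set_eqI)
  fix x :: "nat \<times> nat"
  obtain r c where x: "x = (r, c)" by (metis surj_pair)
  have "(r, c) \<in> inner_cells (tp n v p) \<longleftrightarrow> r < n \<and> c < p r"
  proof
    assume "(r, c) \<in> inner_cells (tp n v p)"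
    then have nd: "(r, c) \<notin> dom (tp n v p)" and "\<exists>z\<in>dom (tp n v p). le2 (r, c) z"
      unfolding inner_iff by blast+
    then obtain r' where r': "r' < n" "r \<le> r'" "c \<le> p r'" unfolding dom_tp le2_def by auto
    then have "p r' \<le> p r" using anti_le[OF assms] by blast
    moreover have "r < n" using r' by simp
    moreover have "c \<noteq> p r" using nd \<open>r < n\<close> by (auto simp: dom_tp)
    ultimately show "r < n \<and> c < p r" using r' by simp
  next
    assume a: "r < n \<and> c < p r"
    then have "(r, c) \<notin> dom (tp n v p)" by (auto simp: dom_tp)
    moreover have "(r, p r) \<in> dom (tp n v p)" using a by (auto simp: dom_tp)
    moreover have "le2 (r, c) (r, p r)" using a by (simp add: le2_def)
    ultimately show "(r, c) \<in> inner_cells (tp n v p)" unfolding inner_iff by blast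
  qed
  then show "x \<in> inner_cells (tp n v p) \<longleftrightarrow> x \<in> {(r, c). r < n \<and> c < p r}" using x by simp
qed

lemma convs_tp:
  assumes "anti n p"
  shows "convs (dom (tp n v p))"
  unfolding convs_def
proof (intro allI impI)
  fix x y z
  assume x: "x \<in> dom (tp n v p)" and z: "z \<in> dom (tp n v p)" and xy: "le2 x y" and yz: "le2 y z"
  obtain r1 where r1: "r1 < n" "x = (r1, p r1)" using x by (auto simp: dom_tp)
  obtain r2 where r2: "r2 < n" "z = (r2, p r2)" using z by (auto simp: dom_tp)
  obtain ry cy where y: "y = (ry, cy)" by (metis surj_pair)
  have a: "r1 \<le> ry" "ry \<le> r2" "p r1 \<le> cy" "cy \<le> p r2" using xy yz r1 r2 y by (auto simp: le2_def)
  have "p r2 \<le> p ry" using anti_le[OF assms a(2) r2(1)] .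
  moreover have "p ry \<le> p r1" using anti_le[OF assms a(1)] a(2) r2(1) by simp
  ultimately have "cy = p ry" using a by simp
  then show "y \<in> dom (tp n v p)" using y a r2 by (auto simp: dom_tp)
qed

lemma corners_tp:
  assumes "anti n p"
  shows "(r, c) \<in> inner_corners (tp n v p) \<longleftrightarrow>
    r < n \<and> c < p r \<and> (Suc r < n \<longrightarrow> p (Suc r) \<le> c) \<and> p r \<le> Suc c"
  unfolding inner_corners_def inner_tp[OF assms] by auto

lemma chosen_tp:
  assumes "anti n p" "R < n" "0 < p R" "\<forall>r<n. 0 < p r \<longrightarrow> r \<le> R"
  shows "chosen_corner (tp n v p) = (R, p R - 1)"
proof -
  have z: "Suc R < n \<Longrightarrow> p (Suc R) = 0" using assms(4) by force
  have cR: "(R, p R - 1) \<in> inner_corners (tp n v p)"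
    unfolding corners_tp[OF assms(1)] using assms(2,3) z by auto
  have le: "\<And>y. y \<in> inner_corners (tp n v p) \<Longrightarrow> fst y \<le> R"
  proof -
    fix y :: "nat \<times> nat" assume "y \<in> inner_corners (tp n v p)"
    moreover obtain r c where "y = (r, c)" by (metis surj_pair)
    ultimately show "fst y \<le> R" using corners_tp[OF assms(1)] assms(4) by auto
  qed
  show ?thesis unfolding chosen_corner_def
  proof (rule the_equality)
    show "(R, p R - 1) \<in> inner_corners (tp n v p) \<and> (\<forall>y\<in>inner_corners (tp n v p). fst y \<le> fst (R, p R - 1))"
      using cR le by auto
  next
    fix x :: "nat \<times> nat"
    assume a: "x \<in> inner_corners (tp n v p) \<and> (\<forall>y\<in>inner_corners (tp n v p). fst y \<le> fst x)"
    obtain r c where x: "x = (r, c)" by (metis surj_pair)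
    have "R \<le> r" using a cR x by force
    moreover have "r \<le> R" using le a x by force
    ultimately have "r = R" by simp
    then show "x = (R, p R - 1)" using a x corners_tp[OF assms(1)] by auto
  qed
qed

lemma rect_step_tp:
  assumes "anti n p" "R < n" "0 < p R" "\<forall>r<n. 0 < p r \<longrightarrow> r \<le> R"
  shows "rect_step (tp n v p) = slide (Suc n) (tp n v p) (R, p R - 1)"
proof -
  have "(R, p R - 1) \<in> inner_cells (tp n v p)" using inner_tp[OF assms(1)] assms(2,3) by auto
  then have "inner_cells (tp n v p) \<noteq> {}" by blast
  then show ?thesis unfolding rect_step_def using chosen_tp[OF assms] card_dom_tp by simp
qed

lemma slide_noup:
  assumes "anti n p" "R < n" "0 < p R" "\<forall>r<n. 0 < p r \<longrightarrow> r \<le> R"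
    "\<not> (Suc R < n \<and> p R = 1 \<and> \<not> v R < v (Suc R))"
  shows "slide (Suc n) (tp n v p) (R, p R - 1) = tp n v (p(R := p R - 1))"
proof -
  let ?T = "tp n v p" and ?T2 = "tp n v (p(R := p R - 1))"
  have z: "Suc R < n \<Longrightarrow> p (Suc R) = 0" using assms(4) by force
  have sp: "Suc (p R - 1) = p R" using assms(3) by simp
  have e1: "?T (R, Suc (p R - 1)) = Some (v R)" using assms(2) sp by simp
  have upd: "?T((R, p R - 1) := Some (v R), (R, Suc (p R - 1)) := None) = ?T2"
  proof (rule ext)
    fix x :: "nat \<times> nat"
    obtain a b where x: "x = (a, b)" by (metis surj_pair)
    show "(?T((R, p R - 1) := Some (v R), (R, Suc (p R - 1)) := None)) x = ?T2 x"
      unfolding x using assms(2,3) sp by auto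
  qed
  have step: "slide (Suc n) ?T (R, p R - 1) = slide n ?T2 (R, Suc (p R - 1))"
  proof (cases "?T (Suc R, p R - 1)")
    case None
    then show ?thesis using e1 upd by simp
  next
    case (Some b)
    then have "Suc R < n" "p R - 1 = p (Suc R)" "b = v (Suc R)" by (auto split: if_splits)
    then have "p R = 1" using z assms(3) by simp
    then have "v R < v (Suc R)" using assms(5) \<open>Suc R < n\<close> by simp
    then show ?thesis using e1 upd Some \<open>b = v (Suc R)\<close> by simp
  qed
  obtain m where n: "n = Suc m" using assms(2) by (cases n) auto
  have "?T2 (R, Suc (Suc (p R - 1))) = None" using sp by simp
  moreover have "?T2 (Suc R, Suc (p R - 1)) = None" using sp z assms(3) by auto
  ultimately have "slide n ?T2 (R, Suc (p R - 1)) = ?T2" unfolding n by simp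
  then show ?thesis using step by simp
qed

lemma slide_up:
  assumes "anti n p" "R < n" "0 < p R" "\<forall>r<n. 0 < p r \<longrightarrow> r \<le> R"
    "Suc R < n" "p R = 1"
    "\<not> v R < v (Suc R)"
  shows "\<exists>y. slide (Suc n) (tp n v p) (R, p R - 1) y = Some (v (Suc R)) \<and> fst y \<le> R"
proof -
  let ?T = "tp n v p"
  have z: "p (Suc R) = 0" using assms(4,5) by force
  have e1: "?T (R, Suc 0) = Some (v R)" using assms(2,6) by simp
  have e2: "?T (Suc R, 0) = Some (v (Suc R))" using assms(5) z by simp
  let ?T2 = "?T((R, 0) := Some (v (Suc R)), (Suc R, 0) := None)"
  have step: "slide (Suc n) ?T (R, 0) = slide n ?T2 (Suc R, 0)"
    using e1 e2 assms(7) by simp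
  have p0: "p R - 1 = 0" using assms(6) by simp
  have "?T2 (Suc R, 0) = None" by simp
  moreover have "?T2 (R, 0) = Some (v (Suc R))" by simp
  ultimately obtain y where "slide n ?T2 (Suc R, 0) y = Some (v (Suc R))" "le2 y (R, 0)"
    using slide_keep[where T="?T2"] by blast
  then show ?thesis unfolding p0 step by (intro exI[of _ y]) (auto simp: le2_def)
qed

lemma anti_upd:
  assumes "anti n p" "R < n" "0 < p R" "\<forall>r<n. 0 < p r \<longrightarrow> r \<le> R"
  shows "anti n (p(R := p R - 1))"
  unfolding anti_def
proof (intro allI impI)
  fix r assume r: "Suc r < n"
  have z: "Suc R < n \<Longrightarrow> p (Suc R) = 0" using assms(4) by force
  show "(p(R := p R - 1)) (Suc r) \<le> (p(R := p R - 1)) r"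
    using assms(1) r z unfolding anti_def by (cases "r = R"; cases "Suc r = R") auto
qed

lemma sum_upd:
  fixes p :: "nat \<Rightarrow> nat" and R n :: nat
  assumes "R < n" "0 < p R"
  shows "sum (p(R := p R - 1)) {..<n} + 1 = sum p {..<n}"
proof -
  have R: "R \<in> {..<n}" using assms(1) by simp
  have rem: "\<And>g. sum g {..<n} = g R + sum g ({..<n} - {R})" by (rule sum.remove[OF finite_lessThan R])
  have "sum (p(R := p R - 1)) {..<n} = (p(R := p R - 1)) R + sum (p(R := p R - 1)) ({..<n} - {R})"
    by (rule rem)
  then have "sum (p(R := p R - 1)) {..<n} = (p R - 1) + sum (p(R := p R - 1)) ({..<n} - {R})"
    by (simp only: fun_upd_same)
  also have "sum (p(R := p R - 1)) ({..<n} - {R}) = sum p ({..<n} - {R})"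
    by (rule sum.cong) auto
  also have "sum p {..<n} = p R + sum p ({..<n} - {R})"
    by (rule rem)
  ultimately show ?thesis using assms(2) by simp
qed

lemma tp_step:
  assumes "anti n p"
  shows "((\<forall>r<n. p r = 0) \<and> rect_step (tp n v p) = tp n v p) \<or>
    (\<exists>R. R < n \<and> 0 < p R \<and> (\<forall>r<n. 0 < p r \<longrightarrow> r \<le> R) \<and>
        rect_step (tp n v p) = slide (Suc n) (tp n v p) (R, p R - 1))"
proof (cases "\<exists>r<n. 0 < p r")
  case False
  then have "inner_cells (tp n v p) = {}" using inner_tp[OF assms] by auto
  then show ?thesis using False unfolding rect_step_def by auto
next
  case True
  let ?S = "{r. r < n \<and> 0 < p r}"
  have fin: "finite ?S" by simp
  have ne: "?S \<noteq> {}" using True by auto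
  define R where "R = Max ?S"
  have "R \<in> ?S" unfolding R_def using Max_in[OF fin ne] .
  moreover have "\<forall>r<n. 0 < p r \<longrightarrow> r \<le> R" unfolding R_def using fin by auto
  ultimately show ?thesis using rect_step_tp[OF assms] by blast
qed

lemma antidiag_tp: "antidiag_tab w = tp (length w) (\<lambda>r. w ! (length w - 1 - r)) (\<lambda>r. length w - 1 - r)"
proof (rule ext)
  fix x :: "nat \<times> nat"
  obtain a b where x: "x = (a, b)" by (metis surj_pair)
  show "antidiag_tab w x = tp (length w) (\<lambda>r. w ! (length w - 1 - r)) (\<lambda>r. length w - 1 - r) x"
    unfolding x by (simp add: antidiag_tab_def)
qed

lemma tp_cong: "(\<And>r. r < n \<Longrightarrow> v r = v' r) \<Longrightarrow> tp n v p = tp n v' p"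
  unfolding tp_def by (auto simp: fun_eq_iff)

lemma tab_power_tp1: "tab_power (tp n v p) 1 = tp n v p"
proof (rule ext)
  fix x :: "nat \<times> nat"
  obtain r c where x: "x = (r, c)" by (metis surj_pair)
  have rc: "row_cols (tp n v p) r = (if r < n then {p r} else {})" by (auto simp: row_cols_def)
  show "tab_power (tp n v p) 1 x = tp n v p x"
    unfolding x by (cases "r < n") (auto simp: tab_power_def rc Let_def)
qed

lemma stab1_iff:
  "stabilizes_at (tp n v p) 1 \<longleftrightarrow> (\<forall>e r c r' c'. 0 < e \<and> e \<le> n \<longrightarrow> tp n v p (r, c) = Some e
      \<longrightarrow> rect (tp n v p) (r', c') = Some e \<longrightarrow> r' = r)"
  unfolding stabilizes_at_def Let_def tab_power_tp1 card_dom_tp by simp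

lemma stab_eq1: "stabilizes_at S 1 \<Longrightarrow> stab S = 1"
proof -
  assume a: "stabilizes_at S 1"
  have ex: "\<exists>k\<ge>1. stabilizes_at S k" using a by blast
  have "(LEAST k. k \<ge> 1 \<and> stabilizes_at S k) = 1"
    by (rule Least_equality) (use a in simp_all)
  then show ?thesis using ex by (simp add: stab_def)
qed

lemma stab_eq1_D: "stab S = 1 \<Longrightarrow> stabilizes_at S 1"
proof -
  assume a: "stab S = 1"
  have ex: "\<exists>k\<ge>1. stabilizes_at S k"
  proof (rule ccontr)
    assume n: "\<not> (\<exists>k\<ge>1. stabilizes_at S k)"
    have "stab S = 0" unfolding stab_def by (rule if_not_P[OF n])
    then show False using a by simp
  qed
  have L: "(LEAST k. k \<ge> 1 \<and> stabilizes_at S k) = 1" using a ex unfolding stab_def by simp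
  have "(LEAST k. k \<ge> 1 \<and> stabilizes_at S k) \<ge> 1 \<and> stabilizes_at S (LEAST k. k \<ge> 1 \<and> stabilizes_at S k)"
    by (rule LeastI_ex) (use ex in blast)
  then show ?thesis unfolding L by simp
qed

lemma anti_p0: "anti n (\<lambda>r. n - 1 - r)" unfolding anti_def by auto

lemma exist_part: "stab_word (rev [1..<Suc n]) = 1"
proof -
  let ?w = "rev [1..<Suc n]"
  have len: "length ?w = n" by simp
  let ?p0 = "\<lambda>r. n - 1 - r"
  have S: "antidiag_tab ?w = tp n Suc ?p0"
    unfolding antidiag_tp len
  proof (rule tp_cong)
    fix r assume r: "r < n"
    have "?w ! (n - 1 - r) = [1..<Suc n] ! (n - Suc (n - 1 - r))"
      using r by (subst rev_nth) (auto simp del: upt_Suc)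
    also have "\<dots> = 1 + (n - Suc (n - 1 - r))" using r by (intro nth_upt) simp
    also have "\<dots> = Suc r" using r by simp
    finally show "?w ! (n - 1 - r) = Suc r" .
  qed
  have iter: "\<exists>p. anti n p \<and> (rect_step ^^ k) (tp n Suc ?p0) = tp n Suc p" for k
  proof (induction k)
    case 0 then show ?case using anti_p0 by auto
  next
    case (Suc k)
    then obtain p where p: "anti n p" "(rect_step ^^ k) (tp n Suc ?p0) = tp n Suc p" by blast
    from tp_step[OF p(1), of Suc] show ?case
    proof
      assume "(\<forall>r<n. p r = 0) \<and> rect_step (tp n Suc p) = tp n Suc p"
      then show ?thesis using p by auto
    next
      assume "\<exists>R. R < n \<and> 0 < p R \<and> (\<forall>r<n. 0 < p r \<longrightarrow> r \<le> R) \<and>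
        rect_step (tp n Suc p) = slide (Suc n) (tp n Suc p) (R, p R - 1)"
      then obtain R where R: "R < n" "0 < p R" "\<forall>r<n. 0 < p r \<longrightarrow> r \<le> R"
        "rect_step (tp n Suc p) = slide (Suc n) (tp n Suc p) (R, p R - 1)" by blast
      have "rect_step (tp n Suc p) = tp n Suc (p(R := p R - 1))"
        using R(4) slide_noup[OF p(1) R(1-3), of Suc] by simp
      then show ?thesis using p anti_upd[OF p(1) R(1-3)] by auto
    qed
  qed
  obtain p where p: "rect (tp n Suc ?p0) = tp n Suc p"
    using iter unfolding rect_def by blast
  have "stabilizes_at (tp n Suc ?p0) 1"
    unfolding stab1_iff p by (auto split: if_splits)
  then show ?thesis unfolding stab_word_def S by (rule stab_eq1)
qed

lemma uniq_part:
  assumes dw: "distinct w" and sw: "set w = {1..n}" and st: "stab_word w = 1"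
  shows "w = rev [1..<Suc n]"
proof -
  have len: "length w = n" using distinct_card[OF dw] sw by simp
  define v where "v = (\<lambda>r. w ! (n - 1 - r))"
  define p0 where "p0 = (\<lambda>r::nat. n - 1 - r)"
  define S where "S = tp n v p0"
  have SS: "antidiag_tab w = S" unfolding S_def v_def p0_def antidiag_tp len ..
  have stS: "stabilizes_at S 1" using stab_eq1_D st unfolding stab_word_def SS by simp
  have ap0: "anti n p0" unfolding p0_def by (rule anti_p0)
  define N where "N = card (inner_cells S)"
  have "inner_cells S = Sigma {..<n} (\<lambda>r. {..<p0 r})"
    unfolding S_def inner_tp[OF ap0] by auto
  then have N: "N = sum p0 {..<n}" unfolding N_def by (simp add: card_SigmaI)
  define PA where "PA = (\<lambda>k T. \<exists>p. T = tp n v p \<and> anti n p \<and>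
      (\<forall>r. Suc r < n \<longrightarrow> p r = 0 \<longrightarrow> v r < v (Suc r)) \<and> sum p {..<n} + k = N)"
  define PB where "PB = (\<lambda>T. finite (dom T) \<and> convs (dom T) \<and>
      (\<exists>r x. r < n \<and> T x = Some (v r) \<and> fst x < r))"
  have phase: "k \<le> N \<Longrightarrow> PA k ((rect_step ^^ k) S) \<or> PB ((rect_step ^^ k) S)" for k
  proof (induction k)
    case 0
    have o: "\<forall>r. Suc r < n \<longrightarrow> p0 r = 0 \<longrightarrow> v r < v (Suc r)" unfolding p0_def by auto
    have "PA 0 S" unfolding PA_def S_def
      by (rule exI[of _ p0]) (use ap0 N o in simp)
    then show ?case by simp
  next
    case (Suc k)
    then have "PA k ((rect_step ^^ k) S) \<or> PB ((rect_step ^^ k) S)" by simp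
    then show ?case
    proof
      assume "PB ((rect_step ^^ k) S)"
      then obtain r x where B: "finite (dom ((rect_step ^^ k) S))" "convs (dom ((rect_step ^^ k) S))"
        "r < n" "(rect_step ^^ k) S x = Some (v r)" "fst x < r"
        unfolding PB_def by blast
      note G = rect_step_general[OF B(1,2)]
      then obtain y where "rect_step ((rect_step ^^ k) S) y = Some (v r)" "le2 y x" using B(4) by blast
      then have "r < n \<and> rect_step ((rect_step ^^ k) S) y = Some (v r) \<and> fst y < r"
        using B(3,5) by (auto simp: le2_def)
      then have "PB (rect_step ((rect_step ^^ k) S))" unfolding PB_def using G by blast
      then show ?thesis by simp
    next
      assume "PA k ((rect_step ^^ k) S)"
      then obtain p where A: "(rect_step ^^ k) S = tp n v p" "anti n p"
        "\<forall>r. Suc r < n \<longrightarrow> p r = 0 \<longrightarrow> v r < v (Suc r)" "sum p {..<n} + k = N"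
        unfolding PA_def by blast
      have "sum p {..<n} \<noteq> 0" using A(4) Suc.prems by linarith
      then have ex: "\<exists>r<n. p r \<noteq> 0" by (meson lessThan_iff sum.neutral)
      from tp_step[OF A(2), of v] ex obtain R where R: "R < n" "0 < p R" "\<forall>r<n. 0 < p r \<longrightarrow> r \<le> R"
        "rect_step (tp n v p) = slide (Suc n) (tp n v p) (R, p R - 1)" by auto
      show ?thesis
      proof (cases "Suc R < n \<and> p R = 1 \<and> \<not> v R < v (Suc R)")
        case True
        then obtain y where y: "slide (Suc n) (tp n v p) (R, p R - 1) y = Some (v (Suc R))" "fst y \<le> R"
          using slide_up[OF A(2) R(1-3)] by blast
        note G = rect_step_general[OF finite_dom_tp convs_tp[OF A(2)], of v]
        have "Suc R < n \<and> rect_step (tp n v p) y = Some (v (Suc R)) \<and> fst y < Suc R"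
          using y R(4) True by simp
        then have "PB (rect_step (tp n v p))" unfolding PB_def using G by blast
        then show ?thesis using A(1) by simp
      next
        case False
        have rs: "rect_step (tp n v p) = tp n v (p(R := p R - 1))"
          using R(4) slide_noup[OF A(2) R(1-3) False] by simp
        have ord: "\<forall>r. Suc r < n \<longrightarrow> (p(R := p R - 1)) r = 0 \<longrightarrow> v r < v (Suc r)"
        proof (intro allI impI)
          fix r assume r: "Suc r < n" "(p(R := p R - 1)) r = 0"
          show "v r < v (Suc r)"
          proof (cases "r = R")
            case True then show ?thesis using r R(2) False by auto
          next
            case False then show ?thesis using r A(3) by auto
          qed
        qed
        have su: "sum (p(R := p R - 1)) {..<n} + Suc k = N"
          using sum_upd[where p=p, OF R(1,2)] A(4) by linarith
        have "PA (Suc k) (rect_step (tp n v p))" unfolding PA_def rs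
          by (rule exI[of _ "p(R := p R - 1)"]) (use anti_upd[OF A(2) R(1-3)] ord su in simp)
        then show ?thesis using A(1) by simp
      qed
    qed
  qed
  have RN: "rect S = (rect_step ^^ N) S" unfolding rect_def N_def ..
  from phase[of N] have "PA N (rect S) \<or> PB (rect S)" unfolding RN by simp
  then show ?thesis
  proof
    assume "PB (rect S)"
    then obtain r x where B: "r < n" "rect S x = Some (v r)" "fst x < r" unfolding PB_def by blast
    have "n - 1 - r < length w" using B(1) len by simp
    then have "w ! (n - 1 - r) \<in> set w" by (rule nth_mem)
    then have vr: "v r \<in> {1..n}" unfolding v_def sw .
    then have vr2: "0 < v r \<and> v r \<le> n" by simp
    have Sr: "S (r, p0 r) = Some (v r)" unfolding S_def using B(1) by simp
    have H: "\<forall>e r c r' c'. 0 < e \<and> e \<le> n \<longrightarrow> S (r, c) = Some e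
      \<longrightarrow> rect S (r', c') = Some e \<longrightarrow> r' = r" using stS unfolding S_def stab1_iff .
    have Rx: "rect S (fst x, snd x) = Some (v r)" using B(2) by simp
    have "fst x = r" using H[rule_format, OF vr2 Sr Rx] .
    then show ?thesis using B(3) by simp
  next
    assume "PA N (rect S)"
    then obtain p where P: "\<forall>r. Suc r < n \<longrightarrow> p r = 0 \<longrightarrow> v r < v (Suc r)"
      "sum p {..<n} + N = N" unfolding PA_def by blast
    have z: "sum p {..<n} = 0" using P(2) by simp
    have inc: "v r < v (Suc r)" if "Suc r < n" for r
    proof -
      have "p r = 0" using z that by simp
      then show ?thesis using P(1) that by blast
    qed
    let ?u = "rev w"
    have un: "?u ! i = v i" if "i < n" for i
      unfolding v_def using len that by (simp add: rev_nth)
    have "sorted ?u" unfolding sorted_iff_nth_Suc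
    proof (intro allI impI)
      fix i assume i: "Suc i < length ?u"
      then have si: "Suc i < n" using len by simp
      have "v i < v (Suc i)" using inc[OF si] .
      then show "?u ! i \<le> ?u ! Suc i" using un[of i] un[of "Suc i"] si by simp
    qed
    moreover have "distinct ?u" using dw by simp
    moreover have "set ?u = set [1..<Suc n]" unfolding set_rev sw set_upt by auto
    ultimately have "?u = [1..<Suc n]"
      by (rule sorted_distinct_set_unique[OF _ _ sorted_upt distinct_upt])
    then have "rev (rev w) = rev [1..<Suc n]" by (rule arg_cong)
    then show ?thesis by (simp only: rev_rev_ident)
  qed
qed

theorem mainTheorem18:
  fixes n :: nat
  assumes "n \<ge> 1"
  shows "stab_word (rev [1..<Suc n]) = 1 \<and>
         (\<forall>w. distinct w \<and> set w = {1..n} \<longrightarrow> stab_word w = 1 \<longrightarrow> w = rev [1..<Suc n])"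
  using exist_part uniq_part by blast

end
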